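(* Let $n\ge 2$, $q\ge 2$ be integers and let $S\subseteq \bigcup_{i=2}^n \mathbb{Z}_q^i$ be a $q$-ary non-overlapping code. Define $\tilde S=\bigcup_{\mathbf{s}\in S}\tilde{\mathbf{s}}$, where $$\tilde{\mathbf{s}}=\{\mathbf{s}\,\|\,\mathrm{suf}(\mathbf{x},n-|\mathbf{s}|) : \mathbf{x}\in S,\ |\mathbf{x}|>n-|\mathbf{s}|\}.$$ Then $\tilde S\subseteq\mathbb{Z}_q^n$ is a fixed-length non-overlapping code of length $n$, i.e. $\mathrm{pre}(\mathbf{u}')\cap\mathrm{suf}(\mathbf{v}')=\emptyset$ for all $\mathbf{u}',\mathbf{v}'\in\tilde S$ (possibly equal).
   Context: $\mathbb{Z}_q=\{0,1,\dots,q-1\}$; words are finite strings over $\mathbb{Z}_q$, $|\mathbf{s}|$ denotes the length of $\mathbf{s}$, and $\mathbf{u}\|\mathbf{v}$ denotes concatenation. For $\mathbf{s}=(s_1,\dots,s_m)$ and $0\le k\le m$, $\mathrm{pre}(\mathbf{s},k)=(s_1,\dots,s_k)$ and $\mathrm{suf}(\mathbf{s},k)=(s_{m-k+1},\dots,s_m)$, with $\mathrm{pre}(\mathbf{s},0)$, $\mathrm{suf}(\mathbf{s},0)$ the empty string. $\mathrm{pre}(\mathbf{s})=\{\mathrm{pre}(\mathbf{s},k):1\le k\le m-1\}$ and $\mathrm{suf}(\mathbf{s})=\{\mathrm{suf}(\mathbf{s},k):1\le k\le m-1\}$. A code $S\subseteq\bigcup_{i=2}^n\mathbb{Z}_q^i$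 is non-overlapping if (1) for all $\mathbf{u},\mathbf{v}\in S$ (possibly equal), $\mathrm{pre}(\mathbf{u})\cap\mathrm{suf}(\mathbf{v})=\emptyset$, and (2) for all distinct $\mathbf{u},\mathbf{v}\in S$ with $|\mathbf{u}|\le|\mathbf{v}|$, $\mathbf{u}$ is not a (contiguous) subword of $\mathbf{v}$, i.e. $\mathbf{u}\neq(v_{j+1},\dots,v_{j+|\mathbf{u}|})$ for all $0\le j\le|\mathbf{v}|-|\mathbf{u}|$. A fixed-length code is one all of whose codewords have the same length; for it condition (2) is automatic. *)

theory Defs
  imports Main
begin

text \<open>Words over Z_q are lists of naturals with all entries < q.\<close>

definition pre_k :: "nat list \<Rightarrow> nat \<Rightarrow> nat list" where
  "pre_k s k = take k s"

definition suf_k :: "nat list \<Rightarrow> nat \<Rightarrow> nat list" where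
  "suf_k s k = drop (length s - k) s"

definition pres :: "nat list \<Rightarrow> nat list set" where
  "pres s = {pre_k s k | k. 1 \<le> k \<and> k \<le> length s - 1}"

definition sufs :: "nat list \<Rightarrow> nat list set" where
  "sufs s = {suf_k s k | k. 1 \<le> k \<and> k \<le> length s - 1}"

definition is_subword :: "nat list \<Rightarrow> nat list \<Rightarrow> bool" where
  "is_subword u v \<longleftrightarrow> (\<exists>j. j + length u \<le> length v \<and> u = take (length u) (drop j v))"

definition code_space :: "nat \<Rightarrow> nat \<Rightarrow> nat list set" where
  "code_space q n = {s. 2 \<le> length s \<and> length s \<le> n \<and> (\<forall>x\<in>set s. x < q)}"

definition non_overlapping :: "nat list set \<Rightarrow> bool" where
  "non_overlapping S \<longleftrightarrow>
     (\<forall>u\<in>S. \<forall>v\<in>S. pres u \<inter> sufs v = {}) \<and>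
     (\<forall>u\<in>S. \<forall>v\<in>S. u \<noteq> v \<and> length u \<le> length v \<longrightarrow> \<not> is_subword u v)"

definition tilde_word :: "nat \<Rightarrow> nat list set \<Rightarrow> nat list \<Rightarrow> nat list set" where
  "tilde_word n S s = {s @ suf_k x (n - length s) | x. x \<in> S \<and> length x > n - length s}"

definition tilde_code :: "nat \<Rightarrow> nat list set \<Rightarrow> nat list set" where
  "tilde_code n S = (\<Union>s\<in>S. tilde_word n S s)"

end

theory Submission
  imports Defs
begin

lemma keyL:
  assumes NO: "non_overlapping S" and sS: "s \<in> S" and yS: "y \<in> S"
    and m1: "1 \<le> m" and my: "m < length y"
    and tm: "take m u = drop (length y - m) y"
    and ts: "take (length s) u = s"
  shows False
proof (cases "m < length s")
  case True
  have "take m s = take m u" using ts True by (metis min.strict_order_iff take_take)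
  hence "pre_k s m \<in> pres s \<inter> sufs y"
    using True m1 my tm unfolding pres_def sufs_def pre_k_def suf_k_def by force
  thus False using NO sS yS unfolding non_overlapping_def by blast
next
  case False
  have "s = take (length s) (take m u)" using False ts by (simp add: min_def)
  hence e: "s = take (length s) (drop (length y - m) y)" using tm by simp
  have "is_subword s y" unfolding is_subword_def
    by (rule exI[of _ "length y - m"]) (use e False my in auto)
  moreover have "s \<noteq> y" "length s \<le> length y" using False my by auto
  ultimately show False using NO sS yS unfolding non_overlapping_def by blast
qed

theorem mainTheorem2:
  fixes n q :: nat and S :: "nat list set"
  assumes "n \<ge> 2" and "q \<ge> 2"
    and "S \<subseteq> code_space q n"
    and "non_overlapping S"
  shows "tilde_code n S \<subseteq> {w. length w = n \<and> (\<forall>x\<in>set w. x < q)}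
         \<and> (\<forall>u\<in>tilde_code n S. \<forall>v\<in>tilde_code n S. pres u \<inter> sufs v = {})"
proof
  show "tilde_code n S \<subseteq> {w. length w = n \<and> (\<forall>x\<in>set w. x < q)}"
  proof
    fix w assume "w \<in> tilde_code n S"
    then obtain s x where sx: "s \<in> S" "x \<in> S" "length x > n - length s"
      "w = s @ suf_k x (n - length s)"
      unfolding tilde_code_def tilde_word_def by blast
    have "s \<in> code_space q n" "x \<in> code_space q n" using sx assms(3) by auto
    hence "length s \<le> n" "\<forall>c\<in>set s. c < q" "\<forall>c\<in>set x. c < q"
      unfolding code_space_def by auto
    moreover have "set (suf_k x (n - length s)) \<subseteq> set x"
      unfolding suf_k_def by (rule set_drop_subset)
    ultimately show "w \<in> {w. length w = n \<and> (\<forall>x\<in>set w. x < q)}"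
      using sx by (auto simp: suf_k_def)
  qed
next
  show "\<forall>u\<in>tilde_code n S. \<forall>v\<in>tilde_code n S. pres u \<inter> sufs v = {}"
  proof (intro ballI equals0I)
    fix u v w assume u: "u \<in> tilde_code n S" and v: "v \<in> tilde_code n S"
      and w: "w \<in> pres u \<inter> sufs v"
    obtain s x where sx: "s \<in> S" "x \<in> S" "length x > n - length s"
      "u = s @ suf_k x (n - length s)"
      using u unfolding tilde_code_def tilde_word_def by blast
    obtain t y where ty: "t \<in> S" "y \<in> S" "length y > n - length t"
      "v = t @ suf_k y (n - length t)"
      using v unfolding tilde_code_def tilde_word_def by blast
    have ls: "length s \<le> n" "length t \<le> n" "length x \<le> n" "length y \<le> n"
      using sx ty assms(3) unfolding code_space_def by auto
    define b where "b = suf_k y (n - length t)"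
    have lb: "length b = n - length t" using ty(3) unfolding b_def suf_k_def by simp
    have lu: "length u = n" "length v = n" using sx ty ls by (auto simp: suf_k_def)
    obtain k where k0: "1 \<le> k" "k \<le> n - 1" "w = take k u"
      using w lu unfolding pres_def pre_k_def by auto
    obtain k' where k1: "1 \<le> k'" "k' \<le> n - 1" "w = drop (n - k') v"
      using w lu unfolding sufs_def suf_k_def by auto
    have "k = k'" using k0 k1 lu
    proof -
      have "length (take k u) = k" using k0 lu by simp
      moreover have "length (drop (n - k') v) = k'" using k1 lu by simp
      ultimately show ?thesis using k0(3) k1(3) by metis
    qed
    hence k: "1 \<le> k" "k \<le> n - 1" "w = take k u" "w = drop (n - k) v" using k0 k1 by auto
    have ts: "take (length s) u = s" using sx(4) by simp
    have vb: "v = t @ b" using ty(4) b_def by simp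
    show False
    proof (cases "k \<le> length b")
      case True
      have "drop (n - k) v = drop (length b - k) b"
        using vb True lb ls by (simp add: diff_diff_left add.commute)
      also have "\<dots> = drop (length y - k) y"
      proof -
        have "length b - k + (length y - length b) = length y - k" using True lb ty(3) by linarith
        thus ?thesis unfolding b_def suf_k_def using lb by (simp add: b_def suf_k_def add.commute)
      qed
      finally have "take k u = drop (length y - k) y" using k by simp
      moreover have "k < length y" using True lb ty(3) by linarith
      ultimately show False using keyL[OF assms(4) sx(1) ty(2) k(1)] ts by blast
    next
      case False
      define m where "m = k - length b"
      have m1: "1 \<le> m" "m < length t" using False k lb ls unfolding m_def by auto
      have "drop (n - k) v = drop (length t - m) t @ b"
        using vb False lb ls m1 unfolding m_def by (simp add: diff_diff_left)
      hence e: "take k u = drop (length t - m) t @ b" using k by simp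
      have "m \<le> k" unfolding m_def by simp
      hence "take m u = take m (take k u)" by (simp add: min_def)
      also have "\<dots> = drop (length t - m) t" using e m1 by simp
      finally have "take m u = drop (length t - m) t" .
      thus False using keyL[OF assms(4) sx(1) ty(1) m1(1) m1(2)] ts by blast
    qed
  qed
qed

end
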